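(* Let $\mathcal{H}$ be any undirected hypergraph on $\{1,2,3\}$ and consider any network dynamical system on $\mathcal{H}$ with one-dimensional node states, smooth $F$ and smooth edge-dependent coupling functions $G_e$. Then the system does not possess a Field cycle; i.e., there do not exist distinct $i,j\in\{1,2,3\}$ such that $\Delta$, $S_i$, $S_j$ are dynamically invariant and there are two distinct hyperbolic equilibria $\xi_1,\xi_2\in\Delta$, a heteroclinic trajectory from $\xi_1$ to $\xi_2$ contained in $S_i\setminus\Delta$, and a heteroclinic trajectory from $\xi_2$ to $\xi_1$ contained in $S_j\setminus\Delta$.
   Context: A directed hypergraph on $\mathcal{V}=\{1,\dots,N\}$ is a set $\mathcal{E}$ of hyperedges $e=(T(e),H(e))$ with nonempty tail $T(e)$ and head $H(e)$; it is undirected if every hyperedge has the form $(A,A)$. A network dynamical system on it is $\dot x_k = F(x_k) + \sum_{e\in\mathcal{E}:\,k\in H(e)} G_e(x_k; x_{T(e)})$ on $\mathbb{R}^N$, with $F:\mathbb R\to\mathbb R$ smooth and each $G_e:\mathbb{R}\times\mathbb{R}^{|T(e)|}\to\mathbb{R}$ smooth, invariant under permutations of its tail arguments and depending nontrivially on them. For $N=3$: $\Delta=\{x_1=x_2=x_3\}$, $S_1=\{x_2=x_3\}$, $S_2=\{x_1=x_3\}$, $S_3=\{x_1=x_2\}$ ($S_j$ is the set where all coordinates except $x_j$ coincide). A heteroclinic trajectory from $\xi$ to $\xi'$ is a solution $x(t)$, $t\in\mathbb R$, with $x(t)\to\xi$ as $t\to-\infty$ and $x(t)\to\xi'$ as $t\to+\infty$.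 An equilibrium is hyperbolic if its Jacobian has no eigenvalue with zero real part. *)

theory Defs
  imports "HOL-Analysis.Analysis" "HOL-Library.Numeral_Type"
begin

fun Ck :: "nat \<Rightarrow> ('a::euclidean_space \<Rightarrow> real) \<Rightarrow> bool" where
  "Ck 0 f = continuous_on UNIV f"
| "Ck (Suc k) f = ((\<forall>x. f differentiable (at x)) \<and>
      (\<forall>v. Ck k (\<lambda>x. frechet_derivative f (at x) v)))"

definition smooth :: "('a::euclidean_space \<Rightarrow> real) \<Rightarrow> bool" where
  "smooth f \<longleftrightarrow> (\<forall>k. Ck k f)"

text \<open>Hyperedges on nodes of type 3 (nodes 1,2,3): pairs (tail, head).\<close>
type_synonym hedge = "3 set \<times> 3 set"

definition undirected_hypergraph :: "hedge set \<Rightarrow> bool" where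
  "undirected_hypergraph E \<longleftrightarrow> (\<forall>e\<in>E. fst e \<noteq> {} \<and> snd e \<noteq> {} \<and> fst e = snd e)"

text \<open>A coupling function for edge e: G e y x, where y is the own state x_k and only the
  tail coordinates x_{T(e)} of x matter (so G e is a function of (x_k; x_{T(e)})).\<close>
definition admissible_coupling :: "3 set \<Rightarrow> (real \<Rightarrow> real^3 \<Rightarrow> real) \<Rightarrow> bool" where
  "admissible_coupling T g \<longleftrightarrow>
     smooth (\<lambda>p::real \<times> (real^3). g (fst p) (snd p)) \<and>
     (\<forall>y x x'. (\<forall>k\<in>T. x $ k = x' $ k) \<longrightarrow> g y x = g y x') \<and>
     (\<forall>\<sigma> y x. \<sigma> permutes T \<longrightarrow> g y (\<chi> k. x $ \<sigma> k) = g y x) \<and>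
     (\<exists>y x x'. g y x \<noteq> g y x')"

definition network_vf ::
  "(real \<Rightarrow> real) \<Rightarrow> (hedge \<Rightarrow> real \<Rightarrow> real^3 \<Rightarrow> real) \<Rightarrow> hedge set \<Rightarrow> real^3 \<Rightarrow> real^3" where
  "network_vf F G E x = (\<chi> k. F (x $ k) + (\<Sum>e\<in>{e\<in>E. k \<in> snd e}. G e (x $ k) x))"

definition Diag :: "(real^3) set" where
  "Diag = {x. x $ 1 = x $ 2 \<and> x $ 2 = x $ 3}"

definition Ssub :: "3 \<Rightarrow> (real^3) set" where
  "Ssub i = {x. \<forall>a b. a \<noteq> i \<longrightarrow> b \<noteq> i \<longrightarrow> x $ a = x $ b}"

definition is_solution :: "(real^3 \<Rightarrow> real^3) \<Rightarrow> real set \<Rightarrow> (real \<Rightarrow> real^3) \<Rightarrow> bool" where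
  "is_solution f I x \<longleftrightarrow> (\<forall>t\<in>I. (x has_vector_derivative f (x t)) (at t within I))"

definition dyn_invariant :: "(real^3 \<Rightarrow> real^3) \<Rightarrow> (real^3) set \<Rightarrow> bool" where
  "dyn_invariant f M \<longleftrightarrow> (\<forall>I x t0. is_interval I \<longrightarrow> is_solution f I x \<longrightarrow> t0 \<in> I \<longrightarrow>
      x t0 \<in> M \<longrightarrow> (\<forall>t\<in>I. x t \<in> M))"

definition hyperbolic_equilibrium :: "(real^3 \<Rightarrow> real^3) \<Rightarrow> real^3 \<Rightarrow> bool" where
  "hyperbolic_equilibrium f \<xi> \<longleftrightarrow> f \<xi> = 0 \<and>
     (\<exists>f'. (f has_derivative f') (at \<xi>) \<and>
        (\<forall>\<mu>::complex. Re \<mu> = 0 \<longrightarrow>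
           det (\<chi> i j. complex_of_real (matrix f' $ i $ j) - (if i = j then \<mu> else 0)) \<noteq> 0))"

definition heteroclinic :: "(real^3 \<Rightarrow> real^3) \<Rightarrow> real^3 \<Rightarrow> real^3 \<Rightarrow> (real \<Rightarrow> real^3) \<Rightarrow> bool" where
  "heteroclinic f \<xi> \<xi>' x \<longleftrightarrow> is_solution f UNIV x \<and>
     (x \<longlongrightarrow> \<xi>) at_bot \<and> (x \<longlongrightarrow> \<xi>') at_top"

end

theory Submission
  imports Defs
begin

definition C1 :: "('a::euclidean_space \<Rightarrow> real) \<Rightarrow> bool" where
  "C1 \<phi> \<longleftrightarrow> (\<forall>x. \<phi> differentiable (at x)) \<and>
     (\<forall>v. continuous_on UNIV (\<lambda>x. frechet_derivative \<phi> (at x) v))"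

lemma smooth_C1: "smooth \<phi> \<Longrightarrow> C1 \<phi>"
  unfolding smooth_def C1_def
  by (metis Ck.simps One_nat_def)

lemma C1I:
  assumes "\<And>x. (\<phi> has_derivative D x) (at x)"
    and "\<And>v. continuous_on UNIV (\<lambda>x. D x v)"
  shows "C1 \<phi>"
proof -
  have "frechet_derivative \<phi> (at x) = D x" for x
    using frechet_derivative_at[OF assms(1)] by simp
  then show ?thesis using assms unfolding C1_def differentiable_def by auto
qed

lemma C1D: "C1 \<phi> \<Longrightarrow> (\<phi> has_derivative frechet_derivative \<phi> (at x)) (at x)"
  unfolding C1_def using frechet_derivative_works by blast

lemma C1_cont: "C1 \<phi> \<Longrightarrow> continuous_on UNIV (\<lambda>x. frechet_derivative \<phi> (at x) v)"
  unfolding C1_def by blast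

lemma C1_add: "C1 \<phi> \<Longrightarrow> C1 \<psi> \<Longrightarrow> C1 (\<lambda>x. \<phi> x + \<psi> x)"
  apply (rule C1I[where D="\<lambda>x v. frechet_derivative \<phi> (at x) v + frechet_derivative \<psi> (at x) v"])
   apply (intro has_derivative_add C1D; assumption)
  by (intro continuous_on_add C1_cont)

lemma C1_diff: "C1 \<phi> \<Longrightarrow> C1 \<psi> \<Longrightarrow> C1 (\<lambda>x. \<phi> x - \<psi> x)"
  apply (rule C1I[where D="\<lambda>x v. frechet_derivative \<phi> (at x) v - frechet_derivative \<psi> (at x) v"])
   apply (intro has_derivative_diff C1D; assumption)
  by (intro continuous_on_diff C1_cont)

lemma C1_uminus: "C1 \<phi> \<Longrightarrow> C1 (\<lambda>x. - \<phi> x)"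
  apply (rule C1I[where D="\<lambda>x v. - frechet_derivative \<phi> (at x) v"])
   apply (intro has_derivative_minus C1D; assumption)
  by (intro continuous_on_minus C1_cont)

lemma C1_sum: "finite S \<Longrightarrow> (\<And>i. i \<in> S \<Longrightarrow> C1 (\<phi> i)) \<Longrightarrow> C1 (\<lambda>x. \<Sum>i\<in>S. \<phi> i x)"
  apply (rule C1I[where D="\<lambda>x v. \<Sum>i\<in>S. frechet_derivative (\<phi> i) (at x) v"])
   apply (intro has_derivative_sum C1D; simp)
  by (intro continuous_on_sum C1_cont; simp)

lemma C1_compose_linear:
  fixes L :: "'a::euclidean_space \<Rightarrow> 'b::euclidean_space"
  assumes "C1 \<phi>" "linear L"
  shows "C1 (\<lambda>x. \<phi> (L x))"
proof (rule C1I[where D="\<lambda>x v. frechet_derivative \<phi> (at (L x)) (L v)"])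
  fix x
  have "(L has_derivative L) (at x)" using assms(2) by (simp add: linear_imp_has_derivative)
  then show "((\<lambda>x. \<phi> (L x)) has_derivative (\<lambda>v. frechet_derivative \<phi> (at (L x)) (L v))) (at x)"
    using has_derivative_compose[OF _ C1D[OF assms(1)]] by blast
next
  fix v
  have "continuous_on UNIV L" using assms(2) by (simp add: linear_continuous_on linear_linear)
  then show "continuous_on UNIV (\<lambda>x. frechet_derivative \<phi> (at (L x)) (L v))"
    using continuous_on_compose2[OF C1_cont[OF assms(1)]] by blast
qed

lemma C1_line_deriv:
  assumes "C1 \<phi>"
  shows "((\<lambda>s. \<phi> (q + s *\<^sub>R v)) has_real_derivative frechet_derivative \<phi> (at (q + s *\<^sub>R v)) v) (at s)"
proof -
  have l: "linear (frechet_derivative \<phi> (at y))" for y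
    using C1D[OF assms] has_derivative_linear by blast
  have "((\<lambda>s. q + s *\<^sub>R v) has_derivative (\<lambda>s. s *\<^sub>R v)) (at s)"
    by (auto intro!: derivative_eq_intros)
  from has_derivative_compose[OF this C1D[OF assms]]
  have "((\<lambda>s. \<phi> (q + s *\<^sub>R v)) has_derivative (\<lambda>t. frechet_derivative \<phi> (at (q + s *\<^sub>R v)) (t *\<^sub>R v))) (at s)" .
  moreover have "(\<lambda>t. frechet_derivative \<phi> (at (q + s *\<^sub>R v)) (t *\<^sub>R v)) = (\<lambda>t. frechet_derivative \<phi> (at (q + s *\<^sub>R v)) v * t)"
    using l by (simp add: linear_scale mult.commute)
  ultimately show ?thesis by (simp add: has_field_derivative_def)
qed

lemma C1_continuous: "C1 \<phi> \<Longrightarrow> continuous_on UNIV \<phi>"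
  unfolding C1_def by (meson continuous_at_imp_continuous_on differentiable_imp_continuous_within)

lemma C1_lipschitz:
  fixes \<phi> :: "'a::euclidean_space \<Rightarrow> real"
  assumes "C1 \<phi>"
  shows "\<exists>B. \<forall>x\<in>cball p r. \<forall>y\<in>cball p r. \<bar>\<phi> x - \<phi> y\<bar> \<le> B * norm (x - y)"
proof -
  have "\<exists>M. \<forall>x\<in>cball p r. \<bar>frechet_derivative \<phi> (at x) b\<bar> \<le> M" for b
  proof -
    have "compact ((\<lambda>x. frechet_derivative \<phi> (at x) b) ` cball p r)"
      by (rule compact_continuous_image[OF continuous_on_subset[OF C1_cont[OF assms]]]) auto
    then obtain M where "\<forall>y\<in>(\<lambda>x. frechet_derivative \<phi> (at x) b) ` cball p r. norm y \<le> M"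
      using compact_imp_bounded bounded_iff by metis
    then show ?thesis by auto
  qed
  then obtain M where M: "\<And>b x. x \<in> cball p r \<Longrightarrow> \<bar>frechet_derivative \<phi> (at x) b\<bar> \<le> M b"
    by metis
  define B where "B = (\<Sum>b\<in>Basis. M b)"
  have "norm (\<phi> x - \<phi> y) \<le> B * norm (x - y)" if "x \<in> cball p r" "y \<in> cball p r" for x y
  proof (rule differentiable_bound[where f'="\<lambda>x. frechet_derivative \<phi> (at x)" and S="cball p r"])
    show "convex (cball p r)" by simp
    show "(\<phi> has_derivative frechet_derivative \<phi> (at x)) (at x within cball p r)" for x
      using C1D[OF assms] has_derivative_at_withinI by blast
    show "onorm (frechet_derivative \<phi> (at x)) \<le> B" if "x \<in> cball p r" for x
    proof (rule onorm_le)
      fix v :: 'a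
      have l: "linear (frechet_derivative \<phi> (at x))"
        using C1D[OF assms] has_derivative_linear by blast
      have "frechet_derivative \<phi> (at x) v = frechet_derivative \<phi> (at x) (\<Sum>b\<in>Basis. (v \<bullet> b) *\<^sub>R b)"
        by (simp add: euclidean_representation)
      also have "\<dots> = (\<Sum>b\<in>Basis. (v \<bullet> b) * frechet_derivative \<phi> (at x) b)"
        using l by (simp add: linear_sum linear_scale)
      finally have "norm (frechet_derivative \<phi> (at x) v) \<le> (\<Sum>b\<in>Basis. \<bar>v \<bullet> b\<bar> * \<bar>frechet_derivative \<phi> (at x) b\<bar>)"
        by (simp add: sum_abs abs_mult order_trans[OF sum_abs])
      also have "\<dots> \<le> (\<Sum>b\<in>Basis. norm v * M b)"
        by (intro sum_mono mult_mono Basis_le_norm M that) auto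
      finally show "norm (frechet_derivative \<phi> (at x) v) \<le> B * norm v"
        by (simp add: B_def sum_distrib_left mult.commute)
    qed
  qed (use that in auto)
  then show ?thesis by (intro exI[of _ B]) auto
qed

lemma network_comp: "network_vf F G E x $ k = F (x$k) + (\<Sum>e\<in>{e\<in>E. k \<in> snd e}. G e (x$k) x)"
  by (simp add: network_vf_def)

lemma finite_hedges: "finite (E :: hedge set)"
  by simp

lemma network_C1:
  assumes "smooth F" "\<forall>e\<in>E. admissible_coupling (fst e) (G e)"
  shows "C1 (\<lambda>x. network_vf F G E x $ k)"
proof -
  have lk: "linear (\<lambda>x::real^3. x $ k)"
    using bounded_linear_vec_nth bounded_linear.linear by blast
  have c1: "C1 (\<lambda>x::real^3. F (x $ k))"
    using C1_compose_linear[OF smooth_C1[OF assms(1)] lk] .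
  have c2: "C1 (\<lambda>x. G e (x$k) x)" if "e \<in> E" for e
  proof -
    have s: "C1 (\<lambda>p::real \<times> (real^3). G e (fst p) (snd p))"
      using assms(2) that by (auto simp: admissible_coupling_def intro: smooth_C1)
    have l: "linear (\<lambda>x::real^3. (x $ k, x))"
      using lk by (auto simp: linear_iff)
    show ?thesis using C1_compose_linear[OF s l] by simp
  qed
  show ?thesis
    unfolding network_comp
    by (intro C1_add c1 C1_sum c2) auto
qed

lemma network_lip:
  assumes "smooth F" "\<forall>e\<in>E. admissible_coupling (fst e) (G e)"
  shows "\<exists>L. \<forall>x\<in>cball p r. \<forall>y\<in>cball p r.
            norm (network_vf F G E x - network_vf F G E y) \<le> L * norm (x - y)"
proof -
  have "\<exists>B. \<forall>x\<in>cball p r. \<forall>y\<in>cball p r.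
     \<bar>network_vf F G E x $ k - network_vf F G E y $ k\<bar> \<le> B * norm (x - y)" for k
    using C1_lipschitz[OF network_C1[OF assms]] .
  then obtain B where B: "\<And>k x y. x\<in>cball p r \<Longrightarrow> y\<in>cball p r \<Longrightarrow>
     \<bar>network_vf F G E x $ k - network_vf F G E y $ k\<bar> \<le> B k * norm (x - y)"
    by metis
  have "norm (network_vf F G E x - network_vf F G E y) \<le> (\<Sum>k\<in>UNIV. B k) * norm (x - y)"
    if "x\<in>cball p r" "y\<in>cball p r" for x y
  proof -
    have "norm (network_vf F G E x - network_vf F G E y)
       \<le> (\<Sum>k\<in>UNIV. \<bar>(network_vf F G E x - network_vf F G E y) $ k\<bar>)"
      by (rule norm_le_l1_cart)
    also have "\<dots> \<le> (\<Sum>k\<in>UNIV. B k * norm (x - y))"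
      by (intro sum_mono) (use B that in auto)
    finally show ?thesis by (simp add: sum_distrib_right)
  qed
  then show ?thesis by blast
qed

lemma local_existence:
  fixes f :: "'a::euclidean_space \<Rightarrow> 'a"
  assumes lip: "\<And>x y. x\<in>cball p r \<Longrightarrow> y\<in>cball p r \<Longrightarrow> norm (f x - f y) \<le> L * norm (x - y)"
    and r: "r > 0"
  shows "\<exists>h>0. \<exists>u. u 0 = p \<and> (\<forall>t\<in>{0..h}. (u has_vector_derivative f (u t)) (at t within {0..h}))"
proof -
  define K where "K = max L 1"
  have K1: "K \<ge> 1" by (simp add: K_def)
  have lipK: "norm (f x - f y) \<le> K * norm (x - y)" if "x\<in>cball p r" "y\<in>cball p r" for x y
  proof -
    have "L * norm (x - y) \<le> K * norm (x - y)" by (intro mult_right_mono) (auto simp: K_def)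
    then show ?thesis using lip[OF that] by linarith
  qed
  define S where "S = cball p r"
  have S: "closed S" "S \<noteq> {}" "convex S" "p \<in> S" using r by (auto simp: S_def)
  define cp where "cp = closest_point S"
  have cpS: "cp x \<in> S" for x using closest_point_in_set[OF S(1,2)] by (simp add: cp_def)
  have cpL: "dist (cp x) (cp y) \<le> dist x y" for x y
    using closest_point_lipschitz[OF S(3,1,2)] by (simp add: cp_def)
  define g where "g x = f (cp x)" for x
  have gL: "norm (g x - g y) \<le> K * norm (x - y)" for x y
  proof -
    have "norm (g x - g y) \<le> K * norm (cp x - cp y)"
      unfolding g_def using lipK cpS by (simp add: S_def)
    also have "\<dots> \<le> K * norm (x - y)"
      using cpL[of x y] K1 by (intro mult_left_mono) (auto simp: dist_norm)
    finally show ?thesis .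
  qed
  define M where "M = norm (f p) + K * r + 1"
  have "0 \<le> K * r" using K1 r by simp
  then have M0: "M > 0" unfolding M_def using norm_ge_zero[of "f p"] by linarith
  have gM: "norm (g x) \<le> M" for x
  proof -
    have "norm (g x - f p) \<le> K * norm (cp x - p)"
      unfolding g_def using lipK cpS S(4) by (simp add: S_def)
    also have "\<dots> \<le> K * r"
      using cpS[of x] K1 by (intro mult_left_mono) (auto simp: S_def dist_norm norm_minus_commute)
    finally have "norm (g x - f p) \<le> K * r" .
    then show ?thesis unfolding M_def using norm_triangle_sub[of "g x" "f p"] by linarith
  qed
  have gcont: "continuous_on UNIV g"
    by (rule lipschitz_on_continuous_on[of K]) (use K1 gL in \<open>auto intro!: lipschitz_onI simp: dist_norm\<close>)
  define h where "h = min (r / M) (1 / (2*K))"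
  have h0: "h > 0" using r M0 K1 by (simp add: h_def)
  have hM: "h * M \<le> r" using M0 by (simp add: h_def field_simps min_def)
  have hK: "h * K \<le> 1/2" using K1 by (simp add: h_def field_simps min_def)
  define P where "P u t = p + integral {0..t} (\<lambda>s. g (u s))" for u :: "real \<Rightarrow>\<^sub>C 'a" and t
  have gu_cont: "continuous_on A (\<lambda>s. g (apply_bcontfun u s))" for u A
    by (rule continuous_on_compose2[OF gcont]) auto
  have Pcont: "continuous_on (cbox 0 h) (P u)" for u
    unfolding P_def cbox_interval
    by (intro continuous_intros indefinite_integral_continuous_1 integrable_continuous_real gu_cont)
  have "\<exists>w. \<forall>t. apply_bcontfun w t = P u (clamp 0 h t)" for u
    using continuous_on_cbox_bcontfunE[OF Pcont[of u]] by metis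
  then obtain T where T: "\<And>u t. apply_bcontfun (T u) t = P u (clamp 0 h t)" by metis
  have clampI: "clamp 0 h t \<in> {0..h}" for t :: real
    using clamp_in_interval[of 0 h t] h0 by (simp add: cbox_interval)
  have contr: "dist (T u) (T v) \<le> 1/2 * dist u v" for u v
  proof (rule dist_bound)
    fix t
    define \<tau> where "\<tau> = clamp 0 h t"
    have \<tau>: "0 \<le> \<tau>" "\<tau> \<le> h" using clampI[of t] by (auto simp: \<tau>_def)
    have int: "(\<lambda>s. g (apply_bcontfun w s)) integrable_on {0..\<tau>}" for w
      by (intro integrable_continuous_real gu_cont)
    have "dist (T u t) (T v t) = norm (integral {0..\<tau>} (\<lambda>s. g (u s) - g (v s)))"
      by (simp add: T P_def \<tau>_def[symmetric] dist_norm integral_diff[OF int int])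
    also have "\<dots> \<le> (K * dist u v) * Henstock_Kurzweil_Integration.content {0..\<tau>}"
    proof (rule has_integral_bound_real[where S="{}"])
      show "0 \<le> K * dist u v" using K1 by simp
      show "((\<lambda>s. g (u s) - g (v s)) has_integral integral {0..\<tau>} (\<lambda>s. g (u s) - g (v s))) {0..\<tau>}"
        using integrable_diff[OF int int] by (simp add: integrable_integral)
      show "norm (g (u s) - g (v s)) \<le> K * dist u v" for s
        using gL[of "u s" "v s"] dist_bounded[of u s v] K1
        by (metis dist_norm mult_left_mono order_trans zero_le_one order.trans[OF zero_le_one K1])
    qed simp
    also have "\<dots> = K * dist u v * \<tau>" using \<tau> by simp
    also have "\<dots> \<le> K * dist u v * h" using \<tau> K1 by (intro mult_left_mono) auto
    also have "\<dots> \<le> 1/2 * dist u v"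
      using hK by (metis mult.commute mult.left_commute mult_right_mono zero_le_dist)
    finally show "dist (T u t) (T v t) \<le> 1/2 * dist u v" .
  qed
  obtain u where u: "T u = u" using banach_fix_type[of "1/2" T] contr by auto
  define w where "w t = P u t" for t
  have w0: "w 0 = p" by (simp add: w_def P_def)
  have uw: "u t = w t" if "t \<in> {0..h}" for t
    using T[of u t] u that by (simp add: w_def clamp_cancel_cbox cbox_interval)
  have wS: "w t \<in> S" if "t \<in> {0..h}" for t
  proof -
    have int: "(\<lambda>s. g (apply_bcontfun u s)) integrable_on {0..t}"
      by (intro integrable_continuous_real gu_cont)
    have "norm (integral {0..t} (\<lambda>s. g (u s))) \<le> M * Henstock_Kurzweil_Integration.content {0..t}"
      by (rule has_integral_bound_real[where S="{}"]) (use M0 gM int in auto)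
    also have "\<dots> \<le> M * h" using that M0 by simp
    finally have "norm (w t - p) \<le> r" using hM by (simp add: w_def P_def mult.commute)
    then show ?thesis by (simp add: S_def dist_norm norm_minus_commute)
  qed
  have "(w has_vector_derivative f (w t)) (at t within {0..h})" if "t \<in> {0..h}" for t
  proof -
    have "((\<lambda>t. integral {0..t} (\<lambda>s. g (u s))) has_vector_derivative g (u t)) (at t within {0..h})"
      by (rule integral_has_vector_derivative[OF gu_cont that])
    then have "(w has_vector_derivative g (u t)) (at t within {0..h})"
      unfolding w_def P_def by (subst add.commute) (simp add: has_vector_derivative_add_const)
    moreover have "g (u t) = f (w t)"
      using uw[OF that] wS[OF that] by (simp add: g_def cp_def closest_point_self)
    ultimately show ?thesis by simp
  qed
  then show ?thesis using h0 w0 by blast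
qed

lemma Ssub_add: assumes "x \<in> Ssub i" "y \<in> Ssub i" shows "x + y \<in> Ssub i"
  unfolding Ssub_def mem_Collect_eq
proof (intro allI impI)
  fix a b assume "a \<noteq> i" "b \<noteq> i"
  with assms have "x$a = x$b" "y$a = y$b" unfolding Ssub_def by blast+
  then show "(x + y) $ a = (x + y) $ b" by simp
qed
lemma Ssub_scale: assumes "x \<in> Ssub i" shows "c *\<^sub>R x \<in> Ssub i"
  unfolding Ssub_def mem_Collect_eq
proof (intro allI impI)
  fix a b assume "a \<noteq> i" "b \<noteq> i"
  with assms have "x$a = x$b" unfolding Ssub_def by blast
  then show "(c *\<^sub>R x) $ a = (c *\<^sub>R x) $ b" by simp
qed
lemma Ssub_zero: "0 \<in> Ssub i"
  unfolding Ssub_def by simp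
lemma subspace_Ssub: "subspace (Ssub i)"
  unfolding subspace_def using Ssub_add Ssub_scale Ssub_zero by blast
lemma subspace_Diag: "subspace Diag"
  unfolding subspace_def Diag_def mem_Collect_eq
  by (simp del: vec_eq_iff)

lemma tangency:
  assumes inv: "dyn_invariant f M" and sM: "subspace M" and pM: "p \<in> M" and h: "h > 0"
    and u0: "u 0 = p"
    and du: "\<forall>t\<in>{0..h}. (u has_vector_derivative f (u t)) (at t within {0..h})"
  shows "f p \<in> M"
proof -
  have "is_solution f {0..h} u" using du by (simp add: is_solution_def)
  then have inM: "\<forall>t\<in>{0..h}. u t \<in> M"
    using inv pM u0 h unfolding dyn_invariant_def
    by (metis atLeastAtMost_iff is_interval_cc less_eq_real_def order_refl)
  have "(u has_vector_derivative f (u 0)) (at 0 within {0..h})"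
    using du h by simp
  then have "(u has_vector_derivative f p) (at_right 0)"
    using at_within_Icc_at_right[OF h] u0 by simp
  have lim1: "((\<lambda>y. (u y - u 0 - (y - 0) *\<^sub>R f p) /\<^sub>R norm (y - 0)) \<longlongrightarrow> 0) (at_right 0)"
    using \<open>(u has_vector_derivative f p) (at_right 0)\<close>[unfolded has_vector_derivative_def has_derivative_at_within]
    by (rule conjunct2)
  have lim2: "((\<lambda>y. (u y - u 0 - (y - 0) *\<^sub>R f p) /\<^sub>R norm (y - 0) + f p) \<longlongrightarrow> 0 + f p) (at_right 0)"
    by (intro tendsto_add lim1 tendsto_const)
  have eq: "\<forall>\<^sub>F y in at_right 0. (u y - u 0 - (y - 0) *\<^sub>R f p) /\<^sub>R norm (y - 0) + f p = (u y - p) /\<^sub>R y"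
    using eventually_at_right_less[of 0]
  proof eventually_elim
    case (elim y)
    then show ?case using u0 by (simp add: scaleR_diff_right)
  qed
  have lim: "((\<lambda>y. (u y - p) /\<^sub>R y) \<longlongrightarrow> f p) (at_right 0)"
    using tendsto_cong[OF eq] lim2 by simp
  have ev: "\<forall>\<^sub>F y in at_right 0. (u y - p) /\<^sub>R y \<in> M"
  proof -
    have "\<forall>\<^sub>F y in at_right (0::real). y \<in> {0<..<h}" by (rule eventually_at_right_real[OF h])
    then show ?thesis
    proof eventually_elim
      case (elim y)
      then have "u y \<in> M" using inM by auto
      from subspace_scale[OF sM subspace_diff[OF sM this pM], of "inverse y"]
      show ?case by simp
    qed
  qed
  show ?thesis
    by (rule Lim_in_closed_set[OF closed_subspace[OF sM] ev trivial_limit_at_right_real lim])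
qed

lemma network_tangency:
  assumes "smooth F" "\<forall>e\<in>E. admissible_coupling (fst e) (G e)"
    and "dyn_invariant (network_vf F G E) M" "subspace M" "p \<in> M"
  shows "network_vf F G E p \<in> M"
proof -
  obtain L where L: "\<forall>x\<in>cball p 1. \<forall>y\<in>cball p 1.
     norm (network_vf F G E x - network_vf F G E y) \<le> L * norm (x - y)"
    using network_lip[OF assms(1,2)] by blast
  obtain h u where "h > 0" "u 0 = p"
    "\<forall>t\<in>{0..h}. (u has_vector_derivative network_vf F G E (u t)) (at t within {0..h})"
    using local_existence[of p 1 "network_vf F G E" L] L by auto
  then show ?thesis by (rule tangency[OF assms(3,4,5)])
qed

lemma "True" by simp

lemma Diag_alt: "x \<in> Diag \<longleftrightarrow> (\<forall>a b. x $ a = x $ b)"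
  unfolding Diag_def mem_Collect_eq forall_3 by auto

lemma third_index:
  fixes i j :: 3
  assumes "i \<noteq> j"
  obtains k where "k \<noteq> i" "k \<noteq> j" "\<And>a. a = i \<or> a = j \<or> a = k"
proof -
  have "card (UNIV - {i, j}) = 1"
    using assms by (simp add: card_Diff_subset)
  then obtain k where k: "UNIV - {i, j} = {k}" by (rule card_1_singletonE)
  show ?thesis
  proof (rule that[of k])
    show "k \<noteq> i" "k \<noteq> j" using k by blast+
    show "a = i \<or> a = j \<or> a = k" for a using k by blast
  qed
qed

lemma line_deriv_vec:
  fixes f :: "real^3 \<Rightarrow> real^3"
  assumes "(f has_derivative f') (at \<xi>)"
  shows "((\<lambda>s. f (\<xi> + s *\<^sub>R v) $ a) has_real_derivative (f' v $ a)) (at 0)"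
proof -
  have d1: "((\<lambda>s. \<xi> + s *\<^sub>R v) has_derivative (\<lambda>s. s *\<^sub>R v)) (at 0)"
    by (auto intro!: derivative_eq_intros)
  have d2: "(f has_derivative f') (at (\<xi> + 0 *\<^sub>R v))" using assms by simp
  note d3 = has_derivative_compose[OF d1 d2]
  note d4 = bounded_linear.has_derivative[OF bounded_linear_vec_nth[of a] d3]
  have l: "linear f'" using assms has_derivative_linear by blast
  have "(\<lambda>s. f' (s *\<^sub>R v) $ a) = (\<lambda>s. (f' v $ a) * s)"
    using l by (simp add: linear_scale mult.commute)
  then show ?thesis using d4 by (simp add: has_field_derivative_def)
qed

lemma hyper_sym:
  fixes F G E
  defines "f \<equiv> network_vf F G E"
  assumes und: "undirected_hypergraph E"
    and adm: "\<forall>e\<in>E. admissible_coupling (fst e) (G e)"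
    and xi: "\<xi> \<in> Diag" and kl: "k \<noteq> l"
  shows "f (\<xi> + t *\<^sub>R axis l 1) $ k - f (\<xi> + t *\<^sub>R axis k 1) $ l = f \<xi> $ k - f \<xi> $ l"
proof -
  define c where "c = \<xi> $ k"
  have xc: "\<xi> $ m = c" for m using xi unfolding Diag_alt c_def by blast
  define z where "z m t = \<xi> + t *\<^sub>R axis m 1" for m t
  have zc: "z m t $ n = (if n = m then c + t else c)" for m n t
    by (simp add: z_def xc axis_def)
  have sndfst: "snd e = fst e" if "e \<in> E" for e
    using und that unfolding undirected_hypergraph_def by auto
  have G1: "G e c (z m t) = G e c \<xi>" if "e \<in> E" "m \<notin> fst e" for e m t
  proof -
    have "\<forall>y x x'. (\<forall>k\<in>fst e. x $ k = x' $ k) \<longrightarrow> G e y x = G e y x'"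
      using adm that(1) unfolding admissible_coupling_def by blast
    moreover have "\<forall>n\<in>fst e. z m t $ n = \<xi> $ n" using that(2) zc xc by auto
    ultimately show ?thesis by blast
  qed
  have G2: "G e c (z l t) = G e c (z k t)" if "e \<in> E" "k \<in> fst e" "l \<in> fst e" for e t
  proof -
    define \<sigma> where "\<sigma> = Transposition.transpose k l"
    have "\<sigma> permutes fst e" unfolding \<sigma>_def by (rule permutes_swap_id[OF that(2,3)])
    then have "G e c (\<chi> m. z l t $ \<sigma> m) = G e c (z l t)"
      using adm that(1) unfolding admissible_coupling_def by blast
    moreover have "(\<chi> m. z l t $ \<sigma> m) = z k t"
      unfolding vec_eq_iff zc by (auto simp: \<sigma>_def transpose_eq_iff)
    ultimately show ?thesis by simp
  qed
  have fin: "finite A" for A :: "hedge set" by simp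
  define A where "A = {e\<in>E. k \<in> snd e}"
  define B where "B = {e\<in>E. l \<in> snd e}"
  have sumA: "(\<Sum>e\<in>A. G e c (z l t)) = (\<Sum>e\<in>A \<inter> {e. l \<in> snd e}. G e c (z k t)) + (\<Sum>e\<in>A \<inter> - {e. l \<in> snd e}. G e c \<xi>)" for t
  proof -
    have "(\<Sum>e\<in>A. G e c (z l t)) = (\<Sum>e\<in>A. if l \<in> snd e then G e c (z k t) else G e c \<xi>)"
    proof (rule sum.cong)
      fix e assume e: "e \<in> A"
      then have eE: "e \<in> E" and ke0: "k \<in> snd e" by (auto simp: A_def)
      then have ke: "k \<in> fst e" using sndfst[OF eE] by simp
      show "G e c (z l t) = (if l \<in> snd e then G e c (z k t) else G e c \<xi>)"
        using G1[OF eE] G2[OF eE ke] sndfst[OF eE] by simp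
    qed simp
    then show ?thesis by (simp add: sum.If_cases[OF fin])
  qed
  have sumB: "(\<Sum>e\<in>B. G e c (z k t)) = (\<Sum>e\<in>B \<inter> {e. k \<in> snd e}. G e c (z k t)) + (\<Sum>e\<in>B \<inter> - {e. k \<in> snd e}. G e c \<xi>)" for t
  proof -
    have "(\<Sum>e\<in>B. G e c (z k t)) = (\<Sum>e\<in>B. if k \<in> snd e then G e c (z k t) else G e c \<xi>)"
    proof (rule sum.cong)
      fix e assume e: "e \<in> B"
      then have eE: "e \<in> E" using sndfst by (auto simp: B_def)
      show "G e c (z k t) = (if k \<in> snd e then G e c (z k t) else G e c \<xi>)"
        using G1[OF eE] sndfst[OF eE] by simp
    qed simp
    then show ?thesis by (simp add: sum.If_cases[OF fin])
  qed
  have AB: "A \<inter> {e. l \<in> snd e} = B \<inter> {e. k \<in> snd e}" by (auto simp: A_def B_def)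
  have fz: "f (z l t) $ k - f (z k t) $ l = F c - F c + (\<Sum>e\<in>A \<inter> - {e. l \<in> snd e}. G e c \<xi>) - (\<Sum>e\<in>B \<inter> - {e. k \<in> snd e}. G e c \<xi>)" for t
  proof -
    have "z l t $ k = c" "z k t $ l = c" using zc kl by auto
    then show ?thesis
      unfolding f_def network_comp A_def[symmetric] B_def[symmetric]
      using sumA[of t] sumB[of t] AB by simp
  qed
  have "z m 0 = \<xi>" for m by (simp add: z_def)
  then show ?thesis using fz[of t] fz[of 0] by (simp add: z_def)
qed

lemma SsubD: "p \<in> Ssub a \<Longrightarrow> m \<noteq> a \<Longrightarrow> n \<noteq> a \<Longrightarrow> p $ m = p $ n"
  unfolding Ssub_def by blast

lemma sum3_bound:
  fixes g :: "3 \<Rightarrow> real"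
  assumes "\<And>m. g m \<le> B"
  shows "(\<Sum>m\<in>UNIV. g m) \<le> 3 * B"
proof -
  have "(\<Sum>m\<in>UNIV. g m) \<le> (\<Sum>m\<in>(UNIV::3 set). B)" by (intro sum_mono assms)
  then show ?thesis by simp
qed

lemma local_sign:
  fixes \<psi> :: "real^3 \<Rightarrow> real"
  assumes C: "C1 \<psi>" and van: "\<And>q. q \<in> Diag \<Longrightarrow> \<psi> q = 0" and xi: "\<xi> \<in> Diag" and ab: "a \<noteq> b"
    and neg: "frechet_derivative \<psi> (at \<xi>) (axis a 1) < 0"
  shows "\<exists>r>0. \<forall>p. p \<in> Ssub a \<longrightarrow> dist p \<xi> < r \<longrightarrow> p$a \<noteq> p$b \<longrightarrow> \<psi> p * (p$a - p$b) < 0"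
proof -
  define D where "D q = frechet_derivative \<psi> (at q) (axis a 1)" for q
  have "continuous_on UNIV D" unfolding D_def by (rule C1_cont[OF C])
  then obtain \<rho> where \<rho>: "\<rho> > 0" "\<And>q. dist q \<xi> < \<rho> \<Longrightarrow> dist (D q) (D \<xi>) < - D \<xi>"
    unfolding continuous_on_iff using neg by (metis D_def UNIV_I neg_0_less_iff_less)
  have Dneg: "D q < 0" if "dist q \<xi> < \<rho>" for q
    using \<rho>(2)[OF that] by (simp add: dist_real_def)
  define r where "r = \<rho> / 10"
  have r: "r > 0" using \<rho> by (simp add: r_def)
  have "\<psi> p * (p$a - p$b) < 0" if pS: "p \<in> Ssub a" and pd: "dist p \<xi> < r" and pab: "p$a \<noteq> p$b" for p
  proof -
    define d where "d = p$a - p$b"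
    define \<pi> where "\<pi> = p - d *\<^sub>R axis a 1"
    have \<pi>c: "\<pi> $ m = p $ b" for m
    proof (cases "m = a")
      case True then show ?thesis by (simp add: \<pi>_def d_def)
    next
      case False then show ?thesis using SsubD[OF pS False, of b] ab by (simp add: \<pi>_def axis_def)
    qed
    have \<pi>D: "\<pi> \<in> Diag" unfolding Diag_alt using \<pi>c by simp
    define g where "g s = \<psi> (\<pi> + s *\<^sub>R axis a 1)" for s
    have g0: "g 0 = 0" using van[OF \<pi>D] by (simp add: g_def)
    have gd: "g d = \<psi> p" by (simp add: g_def \<pi>_def)
    have gder: "(g has_real_derivative D (\<pi> + s *\<^sub>R axis a 1)) (at s)" for s
      unfolding g_def D_def by (rule C1_line_deriv[OF C])
    have xc: "\<xi> $ m = \<xi> $ b" for m using xi unfolding Diag_alt by blast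
    have npx: "norm (p - \<xi>) < r" using pd by (simp add: dist_norm)
    have bb: "\<bar>p $ b - \<xi> $ b\<bar> < r" using component_le_norm_cart[of "p - \<xi>" b] npx by simp
    have aa: "\<bar>p $ a - \<xi> $ a\<bar> < r" using component_le_norm_cart[of "p - \<xi>" a] npx by simp
    have dd: "\<bar>d\<bar> < 2 * r" using aa bb xc[of a] by (simp add: d_def abs_diff_less_iff)
    have near: "dist (\<pi> + s *\<^sub>R axis a 1) \<xi> < \<rho>" if "\<bar>s\<bar> \<le> \<bar>d\<bar>" for s
    proof -
      have "norm (\<pi> + s *\<^sub>R axis a 1 - \<xi>) \<le> (\<Sum>m\<in>UNIV. \<bar>(\<pi> + s *\<^sub>R axis a 1 - \<xi>) $ m\<bar>)"
        by (rule norm_le_l1_cart)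
      also have "\<dots> \<le> 3 * (\<bar>p $ b - \<xi> $ b\<bar> + \<bar>s\<bar>)"
      proof (rule sum3_bound)
        fix m
        have "(\<pi> + s *\<^sub>R axis a 1 - \<xi>) $ m = (p $ b - \<xi> $ b) + s * (axis a 1 $ m)"
          using \<pi>c[of m] xc[of m] by simp
        moreover have w1: "\<bar>axis a (1::real) $ m\<bar> \<le> 1" by (simp add: axis_def)
        have "\<bar>(p $ b - \<xi> $ b) + s * (axis a 1 $ m)\<bar> \<le> \<bar>p $ b - \<xi> $ b\<bar> + \<bar>s * (axis a 1 $ m)\<bar>"
          by (rule abs_triangle_ineq)
        also have "\<bar>s * (axis a 1 $ m)\<bar> = \<bar>s\<bar> * \<bar>axis a (1::real) $ m\<bar>" by (rule abs_mult)
        also have "\<bar>s\<bar> * \<bar>axis a (1::real) $ m\<bar> \<le> \<bar>s\<bar>" by (rule mult_left_le[OF w1 abs_ge_zero])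
        ultimately show "\<bar>(\<pi> + s *\<^sub>R axis a 1 - \<xi>) $ m\<bar> \<le> \<bar>p $ b - \<xi> $ b\<bar> + \<bar>s\<bar>"
          by linarith
      qed
      also have "\<dots> < 3 * (r + 2 * r)"
      proof -
        have "\<bar>p $ b - \<xi> $ b\<bar> + \<bar>s\<bar> < r + 2 * r" using bb that dd by linarith
        then show ?thesis by simp
      qed
      also have "\<dots> < \<rho>" using r by (simp add: r_def)
      finally show ?thesis by (simp add: dist_norm)
    qed
    show ?thesis
    proof (cases "d > 0")
      case True
      have "\<And>x. 0 \<le> x \<Longrightarrow> x \<le> d \<Longrightarrow> (g has_real_derivative D (\<pi> + x *\<^sub>R axis a 1)) (at x)"
        using gder by blast
      from MVT2[OF True this] obtain z where z: "0 < z" "z < d" "g d - g 0 = (d - 0) * D (\<pi> + z *\<^sub>R axis a 1)"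
        by blast
      have "D (\<pi> + z *\<^sub>R axis a 1) < 0" using z Dneg near[of z] by simp
      then have "\<psi> p < 0" using z g0 gd True by (simp add: mult_pos_neg)
      then show ?thesis using True by (simp add: d_def[symmetric] mult_neg_pos)
    next
      case False
      then have dn: "d < 0" using pab by (simp add: d_def)
      have "\<And>x. d \<le> x \<Longrightarrow> x \<le> 0 \<Longrightarrow> (g has_real_derivative D (\<pi> + x *\<^sub>R axis a 1)) (at x)"
        using gder by blast
      from MVT2[OF dn this] obtain z where z: "d < z" "z < 0" "g 0 - g d = (0 - d) * D (\<pi> + z *\<^sub>R axis a 1)"
        by blast
      have "D (\<pi> + z *\<^sub>R axis a 1) < 0" using z Dneg near[of z] by simp
      then have "\<psi> p > 0" using z g0 gd dn by (simp add: mult_neg_neg)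
      then show ?thesis using dn by (simp add: d_def[symmetric] mult_pos_neg)
    qed
  qed
  then show ?thesis using r by blast
qed

lemma comp_deriv:
  fixes z :: "real \<Rightarrow> real^3"
  assumes "(z has_vector_derivative v) (at t)"
  shows "((\<lambda>t. z t $ a) has_real_derivative v $ a) (at t)"
proof -
  have "(z has_derivative (\<lambda>x. x *\<^sub>R v)) (at t)" using assms by (simp add: has_vector_derivative_def)
  from bounded_linear.has_derivative[OF bounded_linear_vec_nth[of a] this]
  have "((\<lambda>t. z t $ a) has_derivative (\<lambda>x. (x *\<^sub>R v) $ a)) (at t)" .
  moreover have "(\<lambda>x. (x *\<^sub>R v) $ a) = (\<lambda>x. v $ a * x)" by (simp add: mult.commute)
  ultimately show ?thesis by (simp add: has_field_derivative_def)
qed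

lemma traj_common:
  fixes f :: "real^3 \<Rightarrow> real^3" and z :: "real \<Rightarrow> real^3"
  assumes sol: "\<And>t. (z has_vector_derivative f (z t)) (at t)"
    and inS: "\<And>t. z t \<in> Ssub a" and nD: "\<And>t. z t \<notin> Diag" and ab: "a \<noteq> b"
  shows "\<And>t. z t $ a \<noteq> z t $ b"
    and "\<And>t. ((\<lambda>t. (z t $ a - z t $ b)^2) has_real_derivative
            2 * ((f (z t) $ a - f (z t) $ b) * (z t $ a - z t $ b))) (at t)"
proof -
  fix t
  show "z t $ a \<noteq> z t $ b"
  proof
    assume eq: "z t $ a = z t $ b"
    have "z t $ m = z t $ b" for m
      using SsubD[OF inS[of t], of m b] ab eq by (cases "m = a") auto
    then have "z t \<in> Diag" unfolding Diag_alt by metis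
    then show False using nD by blast
  qed
next
  fix t
  have d: "((\<lambda>t. z t $ a - z t $ b) has_real_derivative (f (z t) $ a - f (z t) $ b)) (at t)"
    by (intro DERIV_diff comp_deriv sol)
  from DERIV_mult[OF d d]
  show "((\<lambda>t. (z t $ a - z t $ b)^2) has_real_derivative
            2 * ((f (z t) $ a - f (z t) $ b) * (z t $ a - z t $ b))) (at t)"
    by (simp add: power2_eq_square algebra_simps)
qed

lemma traj_bot:
  fixes f :: "real^3 \<Rightarrow> real^3" and z :: "real \<Rightarrow> real^3"
  assumes C: "C1 (\<lambda>q. f q $ a - f q $ b)" and van: "\<And>q. q \<in> Diag \<Longrightarrow> f q $ a - f q $ b = 0"
    and xi: "\<xi> \<in> Diag" and ab: "a \<noteq> b"
    and sol: "\<And>t. (z has_vector_derivative f (z t)) (at t)"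
    and inS: "\<And>t. z t \<in> Ssub a" and nD: "\<And>t. z t \<notin> Diag"
    and lim: "(z \<longlongrightarrow> \<xi>) at_bot"
  shows "\<not> frechet_derivative (\<lambda>q. f q $ a - f q $ b) (at \<xi>) (axis a 1) < 0"
proof
  assume neg: "frechet_derivative (\<lambda>q. f q $ a - f q $ b) (at \<xi>) (axis a 1) < 0"
  obtain r where r: "r > 0" and rs: "\<And>p. p \<in> Ssub a \<Longrightarrow> dist p \<xi> < r \<Longrightarrow> p$a \<noteq> p$b \<Longrightarrow>
      (f p $ a - f p $ b) * (p$a - p$b) < 0"
    using local_sign[OF C van xi ab neg] by blast
  have "\<forall>\<^sub>F t in at_bot. dist (z t) \<xi> < r" using lim r tendstoD by blast
  then obtain T where T: "\<And>t. t \<le> T \<Longrightarrow> dist (z t) \<xi> < r" by (auto simp: eventually_at_bot_linorder)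
  define V where "V t = (z t $ a - z t $ b)^2" for t
  note tc = traj_common[OF sol inS nD ab]
  have VT: "V T > 0" using tc(1)[of T] by (simp add: V_def)
  have dec: "V T < V t" if "t < T" for t
  proof (rule DERIV_neg_imp_decreasing[OF that])
    fix x assume "t \<le> x" "x \<le> T"
    then have "(f (z x) $ a - f (z x) $ b) * (z x $ a - z x $ b) < 0"
      using rs[OF inS T tc(1)] by simp
    then have "2 * ((f (z x) $ a - f (z x) $ b) * (z x $ a - z x $ b)) < 0" by linarith
    then show "\<exists>y. (V has_real_derivative y) (at x) \<and> y < 0"
      using tc(2)[of x] unfolding V_def[abs_def] by blast
  qed
  have "(V \<longlongrightarrow> (\<xi> $ a - \<xi> $ b)^2) at_bot"
    unfolding V_def[abs_def] by (intro tendsto_intros lim)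
  moreover have "\<xi> $ a - \<xi> $ b = 0" using xi unfolding Diag_alt by simp
  ultimately have "(V \<longlongrightarrow> 0) at_bot" by simp
  then have "\<forall>\<^sub>F t in at_bot. V t < V T" using VT order_tendstoD(2) by blast
  then obtain T2 where T2: "\<And>t. t \<le> T2 \<Longrightarrow> V t < V T" by (auto simp: eventually_at_bot_linorder)
  have "V (min T2 (T - 1)) < V T" by (rule T2) simp
  moreover have "V T < V (min T2 (T - 1))" by (rule dec) simp
  ultimately show False by simp
qed

lemma traj_top:
  fixes f :: "real^3 \<Rightarrow> real^3" and z :: "real \<Rightarrow> real^3"
  assumes C: "C1 (\<lambda>q. f q $ a - f q $ b)" and van: "\<And>q. q \<in> Diag \<Longrightarrow> f q $ a - f q $ b = 0"
    and xi: "\<xi> \<in> Diag" and ab: "a \<noteq> b"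
    and sol: "\<And>t. (z has_vector_derivative f (z t)) (at t)"
    and inS: "\<And>t. z t \<in> Ssub a" and nD: "\<And>t. z t \<notin> Diag"
    and lim: "(z \<longlongrightarrow> \<xi>) at_top"
  shows "\<not> frechet_derivative (\<lambda>q. f q $ a - f q $ b) (at \<xi>) (axis a 1) > 0"
proof
  assume pos: "frechet_derivative (\<lambda>q. f q $ a - f q $ b) (at \<xi>) (axis a 1) > 0"
  have C': "C1 (\<lambda>q. - (f q $ a - f q $ b))" by (rule C1_uminus[OF C])
  have hd: "((\<lambda>q. - (f q $ a - f q $ b)) has_derivative (\<lambda>v. - frechet_derivative (\<lambda>q. f q $ a - f q $ b) (at \<xi>) v)) (at \<xi>)"
    by (intro has_derivative_minus C1D[OF C])
  have "frechet_derivative (\<lambda>q. - (f q $ a - f q $ b)) (at \<xi>) = (\<lambda>v. - frechet_derivative (\<lambda>q. f q $ a - f q $ b) (at \<xi>) v)"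
    by (rule frechet_derivative_at[OF hd, symmetric])
  then have "frechet_derivative (\<lambda>q. - (f q $ a - f q $ b)) (at \<xi>) (axis a 1) < 0"
    using pos by simp
  then obtain r where r: "r > 0" and rs: "\<And>p. p \<in> Ssub a \<Longrightarrow> dist p \<xi> < r \<Longrightarrow> p$a \<noteq> p$b \<Longrightarrow>
      - (f p $ a - f p $ b) * (p$a - p$b) < 0"
    using local_sign[OF C' _ xi ab] van by force
  have "\<forall>\<^sub>F t in at_top. dist (z t) \<xi> < r" using lim r tendstoD by blast
  then obtain T where T: "\<And>t. t \<ge> T \<Longrightarrow> dist (z t) \<xi> < r" by (auto simp: eventually_at_top_linorder)
  define V where "V t = (z t $ a - z t $ b)^2" for t
  note tc = traj_common[OF sol inS nD ab]
  have VT: "V T > 0" using tc(1)[of T] by (simp add: V_def)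
  have inc: "V T < V t" if "T < t" for t
  proof (rule DERIV_pos_imp_increasing[OF that])
    fix x assume "T \<le> x" "x \<le> t"
    then have "- (f (z x) $ a - f (z x) $ b) * (z x $ a - z x $ b) < 0"
      using rs[OF inS T tc(1)] by simp
    moreover have "- (f (z x) $ a - f (z x) $ b) * (z x $ a - z x $ b) = - ((f (z x) $ a - f (z x) $ b) * (z x $ a - z x $ b))"
      by (rule mult_minus_left)
    ultimately have "0 < 2 * ((f (z x) $ a - f (z x) $ b) * (z x $ a - z x $ b))" by linarith
    then show "\<exists>y. (V has_real_derivative y) (at x) \<and> 0 < y"
      using tc(2)[of x] unfolding V_def[abs_def] by blast
  qed
  have "(V \<longlongrightarrow> (\<xi> $ a - \<xi> $ b)^2) at_top"
    unfolding V_def[abs_def] by (intro tendsto_intros lim)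
  moreover have "\<xi> $ a - \<xi> $ b = 0" using xi unfolding Diag_alt by simp
  ultimately have "(V \<longlongrightarrow> 0) at_top" by simp
  then have "\<forall>\<^sub>F t in at_top. V t < V T" using VT order_tendstoD(2) by blast
  then obtain T2 where T2: "\<And>t. t \<ge> T2 \<Longrightarrow> V t < V T" by (auto simp: eventually_at_top_linorder)
  have "V (max T2 (T + 1)) < V T" by (rule T2) simp
  moreover have "V T < V (max T2 (T + 1))" by (rule inc) simp
  ultimately show False by simp
qed

lemma det_const3: "det ((\<chi> a b. c) :: complex^3^3) = 0"
  by (simp add: det_3)

theorem mainTheorem2:
  fixes E :: "hedge set"
    and F :: "real \<Rightarrow> real"
    and G :: "hedge \<Rightarrow> real \<Rightarrow> real^3 \<Rightarrow> real"
  assumes "undirected_hypergraph E"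
    and "smooth F"
    and "\<forall>e\<in>E. admissible_coupling (fst e) (G e)"
  shows "\<not> (\<exists>i j \<xi>1 \<xi>2 x y. i \<noteq> j \<and>
            dyn_invariant (network_vf F G E) Diag \<and>
            dyn_invariant (network_vf F G E) (Ssub i) \<and>
            dyn_invariant (network_vf F G E) (Ssub j) \<and>
            \<xi>1 \<in> Diag \<and> \<xi>2 \<in> Diag \<and> \<xi>1 \<noteq> \<xi>2 \<and>
            hyperbolic_equilibrium (network_vf F G E) \<xi>1 \<and>
            hyperbolic_equilibrium (network_vf F G E) \<xi>2 \<and>
            heteroclinic (network_vf F G E) \<xi>1 \<xi>2 x \<and> (\<forall>t. x t \<in> Ssub i - Diag) \<and>
            heteroclinic (network_vf F G E) \<xi>2 \<xi>1 y \<and> (\<forall>t. y t \<in> Ssub j - Diag))"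
proof
  note und = assms(1) and smF = assms(2) and adm = assms(3)
  define f where "f = network_vf F G E"
  assume "\<exists>i j \<xi>1 \<xi>2 x y. i \<noteq> j \<and>
            dyn_invariant (network_vf F G E) Diag \<and>
            dyn_invariant (network_vf F G E) (Ssub i) \<and>
            dyn_invariant (network_vf F G E) (Ssub j) \<and>
            \<xi>1 \<in> Diag \<and> \<xi>2 \<in> Diag \<and> \<xi>1 \<noteq> \<xi>2 \<and>
            hyperbolic_equilibrium (network_vf F G E) \<xi>1 \<and>
            hyperbolic_equilibrium (network_vf F G E) \<xi>2 \<and>
            heteroclinic (network_vf F G E) \<xi>1 \<xi>2 x \<and> (\<forall>t. x t \<in> Ssub i - Diag) \<and>
            heteroclinic (network_vf F G E) \<xi>2 \<xi>1 y \<and> (\<forall>t. y t \<in> Ssub j - Diag)"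
  then obtain i j \<xi>1 \<xi>2 x y where ij: "i \<noteq> j"
    and invD: "dyn_invariant f Diag" and invi: "dyn_invariant f (Ssub i)"
    and invj: "dyn_invariant f (Ssub j)" and xiD: "\<xi>1 \<in> Diag"
    and hyp: "hyperbolic_equilibrium f \<xi>1"
    and hx: "heteroclinic f \<xi>1 \<xi>2 x" and xS: "\<forall>t. x t \<in> Ssub i - Diag"
    and hy: "heteroclinic f \<xi>2 \<xi>1 y" and yS: "\<forall>t. y t \<in> Ssub j - Diag"
    unfolding f_def by blast
  obtain k where ki: "k \<noteq> i" and kj: "k \<noteq> j" and all3: "\<And>a. a = i \<or> a = j \<or> a = k"
    using third_index[OF ij] by blast
  obtain f' where fd: "(f has_derivative f') (at \<xi>1)"
    and det: "\<forall>\<mu>::complex. Re \<mu> = 0 \<longrightarrow>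
           det (\<chi> a b. complex_of_real (matrix f' $ a $ b) - (if a = b then \<mu> else 0)) \<noteq> 0"
    using hyp unfolding hyperbolic_equilibrium_def by blast
  define J where "J a b = f' (axis b 1) $ a" for a b
  have lin: "linear f'" using fd has_derivative_linear by blast
  have tanD: "f q \<in> Diag" if "q \<in> Diag" for q
    unfolding f_def by (rule network_tangency[OF smF adm invD[unfolded f_def] subspace_Diag that])
  have tanS: "f q \<in> Ssub m" if "dyn_invariant f (Ssub m)" "q \<in> Ssub m" for q m
    unfolding f_def by (rule network_tangency[OF smF adm that(1)[unfolded f_def] subspace_Ssub that(2)])
  have deriv: "((\<lambda>s. f (\<xi>1 + s *\<^sub>R v) $ a) has_real_derivative (f' v $ a)) (at 0)" for v a
    by (rule line_deriv_vec[OF fd])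
  have same_deriv: "f' v $ a = f' v $ b" if "\<And>s. f (\<xi>1 + s *\<^sub>R v) $ a = f (\<xi>1 + s *\<^sub>R v) $ b" for v a b
  proof -
    have "(\<lambda>s. f (\<xi>1 + s *\<^sub>R v) $ a) = (\<lambda>s. f (\<xi>1 + s *\<^sub>R v) $ b)" using that by (rule ext)
    then have "((\<lambda>s. f (\<xi>1 + s *\<^sub>R v) $ a) has_real_derivative (f' v $ b)) (at 0)"
      using deriv[of v b] by simp
    then show ?thesis using deriv[of v a] DERIV_unique by blast
  qed
  have xic: "\<xi>1 $ m = \<xi>1 $ n" for m n using xiD unfolding Diag_alt by blast
  define one where "one = axis i 1 + axis j 1 + (axis k 1 :: real^3)"
  have one1: "one $ m = 1" for m
    using all3[of m] ij ki kj by (auto simp: one_def axis_def)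
  have row: "J a i + J a j + J a k = J b i + J b j + J b k" for a b
  proof -
    have "\<xi>1 + s *\<^sub>R one \<in> Diag" for s
      unfolding Diag_alt using xic one1 by simp
    then have "f (\<xi>1 + s *\<^sub>R one) $ a = f (\<xi>1 + s *\<^sub>R one) $ b" for s
      using tanD unfolding Diag_alt by blast
    then have "f' one $ a = f' one $ b" by (rule same_deriv)
    moreover have "f' one = f' (axis i 1) + f' (axis j 1) + f' (axis k 1)"
      using lin by (simp add: one_def linear_add)
    ultimately show ?thesis by (simp add: J_def)
  qed
  have Sder: "J n m = J n' m" if inv: "dyn_invariant f (Ssub m)" and "n \<noteq> m" "n' \<noteq> m" for m n n'
  proof -
    have "\<xi>1 + s *\<^sub>R axis m 1 \<in> Ssub m" for s
      unfolding Ssub_def mem_Collect_eq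
    proof (intro allI impI)
      fix a b :: 3 assume "a \<noteq> m" "b \<noteq> m"
      then show "(\<xi>1 + s *\<^sub>R axis m 1) $ a = (\<xi>1 + s *\<^sub>R axis m 1) $ b"
        using xic[of a b] by (simp add: axis_def)
    qed
    then have "f (\<xi>1 + s *\<^sub>R axis m 1) $ n = f (\<xi>1 + s *\<^sub>R axis m 1) $ n'" for s
      using SsubD[OF tanS[OF inv], OF _ that(2,3)] by blast
    then have "f' (axis m 1) $ n = f' (axis m 1) $ n'" by (rule same_deriv)
    then show ?thesis by (simp add: J_def)
  qed
  have Si: "J j i = J k i" by (rule Sder[OF invi ij[symmetric] ki])
  have Sj: "J i j = J k j" by (rule Sder[OF invj ij kj])
  \<comment> \<open>symmetry from the hypergraph structure\<close>
  have sym: "J a b = J b a" if ab: "a \<noteq> b" for a b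
  proof -
    have "(\<lambda>s. f (\<xi>1 + s *\<^sub>R axis b 1) $ a - f (\<xi>1 + s *\<^sub>R axis a 1) $ b) = (\<lambda>s. f \<xi>1 $ a - f \<xi>1 $ b)"
      unfolding f_def by (rule ext, rule hyper_sym[OF und adm xiD ab])
    moreover have "((\<lambda>s. f (\<xi>1 + s *\<^sub>R axis b 1) $ a - f (\<xi>1 + s *\<^sub>R axis a 1) $ b) has_real_derivative
        (J a b - J b a)) (at 0)"
      unfolding J_def by (intro DERIV_diff deriv)
    ultimately have "((\<lambda>s. f \<xi>1 $ a - f \<xi>1 $ b) has_real_derivative (J a b - J b a)) (at 0)" by simp
    moreover have "((\<lambda>s. f \<xi>1 $ a - f \<xi>1 $ b) has_real_derivative 0) (at 0)" by (rule DERIV_const)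
    ultimately have "J a b - J b a = 0" using DERIV_unique by blast
    then show ?thesis by simp
  qed
  \<comment> \<open>signs from the heteroclinic trajectories\<close>
  have fdc: "frechet_derivative (\<lambda>q. f q $ a - f q $ b) (at \<xi>1) = (\<lambda>v. f' v $ a - f' v $ b)" for a b
  proof -
    have "((\<lambda>q. f q $ a - f q $ b) has_derivative (\<lambda>v. f' v $ a - f' v $ b)) (at \<xi>1)"
      by (intro has_derivative_diff bounded_linear.has_derivative[OF bounded_linear_vec_nth fd])
    then show ?thesis by (rule frechet_derivative_at[symmetric])
  qed
  have C: "C1 (\<lambda>q. f q $ a - f q $ b)" for a b
    unfolding f_def by (intro C1_diff network_C1[OF smF adm])
  have van: "f q $ a - f q $ b = 0" if "q \<in> Diag" for q a b
    using tanD[OF that] unfolding Diag_alt by simp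
  have solx: "(x has_vector_derivative f (x t)) (at t)" for t
    using hx unfolding heteroclinic_def is_solution_def by simp
  have soly: "(y has_vector_derivative f (y t)) (at t)" for t
    using hy unfolding heteroclinic_def is_solution_def by simp
  have limx: "(x \<longlongrightarrow> \<xi>1) at_bot" using hx unfolding heteroclinic_def by blast
  have limy: "(y \<longlongrightarrow> \<xi>1) at_top" using hy unfolding heteroclinic_def by blast
  have xS1: "x t \<in> Ssub i" and xS2: "x t \<notin> Diag" for t using xS by auto
  have yS1: "y t \<in> Ssub j" and yS2: "y t \<notin> Diag" for t using yS by auto
  have "\<not> frechet_derivative (\<lambda>q. f q $ i - f q $ j) (at \<xi>1) (axis i 1) < 0"
    by (rule traj_bot[OF C van xiD ij solx xS1 xS2 limx])
  then have sgn1: "J i i - J j i \<ge> 0" by (simp add: fdc J_def)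
  have "\<not> frechet_derivative (\<lambda>q. f q $ j - f q $ i) (at \<xi>1) (axis j 1) > 0"
    using ij by (intro traj_top[OF C van xiD _ soly yS1 yS2 limy]) auto
  then have sgn2: "J j j - J i j \<le> 0" by (simp add: fdc J_def)
  have s1: "J i j = J j i" "J i k = J k i" "J j k = J k j"
    using sym ij ki kj by auto
  have r1: "J i i + J i j + J i k = J j i + J j j + J j k" using row by blast
  have r2: "J i i + J i j + J i k = J k i + J k j + J k k" using row by blast
  have allJ: "J a b = J i j" for a b
    using all3[of a] all3[of b] s1 Si Sj r1 r2 sgn1 sgn2 by auto
  have "matrix f' = (\<chi> a b. J i j)"
    unfolding matrix_def vec_eq_iff using allJ by (simp add: J_def)
  then have "(\<chi> a b. complex_of_real (matrix f' $ a $ b) - (if a = b then (0::complex) else 0))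
      = (\<chi> a b. complex_of_real (J i j))"
    by (simp add: vec_eq_iff)
  then have "det (\<chi> a b. complex_of_real (matrix f' $ a $ b) - (if a = b then (0::complex) else 0)) = 0"
    by (simp add: det_const3)
  moreover have "det (\<chi> a b. complex_of_real (matrix f' $ a $ b) - (if a = b then (0::complex) else 0)) \<noteq> 0"
    using det[rule_format, of 0] by simp
  ultimately show False by simp
qed

end
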